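(* Let $\alpha\in(1/2,1)$, $\beta\in(0,1)$, $c\in\mathbb{R}$, and define $\varphi(x)=|x|^{-\beta}$ for $x<-1$ and $\varphi(x)=1$ for $x\ge -1$. Then, as $x\to-\infty$, $$(-\partial_{xx})^\alpha\varphi(x)+c\,\varphi'(x)=-\frac{c_\alpha}{2\alpha\,|x|^{2\alpha}}+\frac{c\,\beta}{|x|^{\beta+1}}+O\!\left(\frac{1}{|x|^{\beta+2\alpha}}\right).$$
   Context: $(-\partial_{xx})^\alpha u(x)=c_\alpha\,\mathrm{PV}\!\int_{\mathbb{R}}\frac{u(x)-u(z)}{|x-z|^{1+2\alpha}}\,dz$, where $c_\alpha>0$ is the normalizing constant of the fractional Laplacian (Fourier symbol $|\xi|^{2\alpha}$) and PV is the Cauchy principal value. *)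

theory Defs
  imports "HOL-Analysis.Analysis" "HOL-Library.Landau_Symbols"
begin

text \<open>Normalizing constant of the one-dimensional fractional Laplacian with
 Fourier symbol |xi|^(2 alpha): c = 4^alpha Gamma(1/2+alpha) / (sqrt pi |Gamma(-alpha)|).\<close>
definition frac_const :: "real \<Rightarrow> real" where
  "frac_const \<alpha> = 4 powr \<alpha> * Gamma (1/2 + \<alpha>) / (sqrt pi * \<bar>Gamma (- \<alpha>)\<bar>)"

definition frac_trunc :: "real \<Rightarrow> (real \<Rightarrow> real) \<Rightarrow> real \<Rightarrow> real \<Rightarrow> real" where
  "frac_trunc \<alpha> u x \<epsilon> =
     (LINT z:{z. \<epsilon> < \<bar>x - z\<bar>}|lborel. (u x - u z) / \<bar>x - z\<bar> powr (1 + 2 * \<alpha>))"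

definition frac_pv_exists :: "real \<Rightarrow> (real \<Rightarrow> real) \<Rightarrow> real \<Rightarrow> bool" where
  "frac_pv_exists \<alpha> u x \<longleftrightarrow>
     (\<forall>\<epsilon>>0. set_integrable lborel {z. \<epsilon> < \<bar>x - z\<bar>}
                 (\<lambda>z. (u x - u z) / \<bar>x - z\<bar> powr (1 + 2 * \<alpha>)))
     \<and> (\<exists>L. (frac_trunc \<alpha> u x \<longlongrightarrow> L) (at_right 0))"

definition frac_lap :: "real \<Rightarrow> (real \<Rightarrow> real) \<Rightarrow> real \<Rightarrow> real" where
  "frac_lap \<alpha> u x = frac_const \<alpha> * Lim (at_right 0) (frac_trunc \<alpha> u x)"

end

theory Submission
  imports Defs
begin


lemma ftc_fin:
  fixes f F :: "real \<Rightarrow> real"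
  assumes "a < b"
    and "\<And>t. a < t \<Longrightarrow> t < b \<Longrightarrow> DERIV F t :> f t"
    and "\<And>t. a < t \<Longrightarrow> t < b \<Longrightarrow> isCont f t"
    and "\<And>t. a < t \<Longrightarrow> t < b \<Longrightarrow> 0 \<le> f t"
    and "(F \<longlongrightarrow> A) (at_right a)" "(F \<longlongrightarrow> B) (at_left b)"
  shows "set_integrable lborel {a<..<b} f" "(LINT t:{a<..<b}|lborel. f t) = B - A"
proof -
  have *: "set_integrable lborel (einterval (ereal a) (ereal b)) f \<and> (LBINT x=ereal a..ereal b. f x) = B - A"
    using interval_integral_FTC_nonneg[of "ereal a" "ereal b" F f A B] assms
    by (auto simp: ereal_tendsto_simps1)
  then show "set_integrable lborel {a<..<b} f" by simp
  from * show "(LINT t:{a<..<b}|lborel. f t) = B - A" using assms(1)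
    by (simp add: interval_lebesgue_integral_def)
qed

lemma ftc_top:
  fixes f F :: "real \<Rightarrow> real"
  assumes "\<And>t. a < t \<Longrightarrow> DERIV F t :> f t"
    and "\<And>t. a < t \<Longrightarrow> isCont f t"
    and "\<And>t. a < t \<Longrightarrow> 0 \<le> f t"
    and "(F \<longlongrightarrow> A) (at_right a)" "(F \<longlongrightarrow> B) at_top"
  shows "set_integrable lborel {a<..} f" "(LINT t:{a<..}|lborel. f t) = B - A"
proof -
  have *: "set_integrable lborel (einterval (ereal a) \<infinity>) f \<and> (LBINT x=ereal a..\<infinity>. f x) = B - A"
    using interval_integral_FTC_nonneg[of "ereal a" "\<infinity>" F f A B] assms
    by (auto simp: ereal_tendsto_simps1)
  then show "set_integrable lborel {a<..} f" by simp
  from * show "(LINT t:{a<..}|lborel. f t) = B - A"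
    by (simp add: interval_lebesgue_integral_def)
qed

lemma ftc_bot:
  fixes f F :: "real \<Rightarrow> real"
  assumes "\<And>t. t < b \<Longrightarrow> DERIV F t :> f t"
    and "\<And>t. t < b \<Longrightarrow> isCont f t"
    and "\<And>t. t < b \<Longrightarrow> 0 \<le> f t"
    and "(F \<longlongrightarrow> A) at_bot" "(F \<longlongrightarrow> B) (at_left b)"
  shows "set_integrable lborel {..<b} f" "(LINT t:{..<b}|lborel. f t) = B - A"
proof -
  have *: "set_integrable lborel (einterval (-\<infinity>) (ereal b)) f \<and> (LBINT x=-\<infinity>..ereal b. f x) = B - A"
    using interval_integral_FTC_nonneg[of "-\<infinity>" "ereal b" F f A B] assms
    by (auto simp: ereal_tendsto_simps1)
  then show "set_integrable lborel {..<b} f" by simp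
  from * show "(LINT t:{..<b}|lborel. f t) = B - A"
    by (simp add: interval_lebesgue_integral_def)
qed


lemma lim_sub_top: "LIM z at_top. z - (x::real) :> at_top"
proof -
  have "LIM z at_top. -x + z :> at_top"
    by (rule filterlim_tendsto_add_at_top[OF tendsto_const filterlim_ident])
  then show ?thesis by simp
qed

lemma lim_sub_bot: "LIM z at_bot. (x::real) - z :> at_top"
proof -
  have "LIM z at_bot. x + (- z) :> at_top"
    by (rule filterlim_tendsto_add_at_top[OF tendsto_const filterlim_uminus_at_top_at_bot])
  then show ?thesis by simp
qed

lemma int_right_tail:
  fixes x d q :: real assumes q: "0 < q" and d: "0 < d"
  shows "set_integrable lborel {x+d<..} (\<lambda>z. (z-x) powr (-(1+q)))"
    "(LINT z:{x+d<..}|lborel. (z-x) powr (-(1+q))) = d powr (-q) / q"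
proof -
  let ?F = "\<lambda>z. - ((z-x) powr (-q)) / q"
  have D: "DERIV ?F t :> (t-x) powr (-(1+q))" if "x+d < t" for t
    using that q d
    apply (auto intro!: derivative_eq_intros)
    apply (simp add: algebra_simps)
    apply (rule arg_cong[where f="\<lambda>e. (t-x) powr e"])
    apply simp
    done
  have A: "(?F \<longlongrightarrow> - (d powr (-q)) / q) (at_right (x+d))"
    using d q by (auto intro!: tendsto_eq_intros)
  have B: "(?F \<longlongrightarrow> 0) at_top"
  proof -
    have "((\<lambda>z. (z-x) powr (-q)) \<longlongrightarrow> 0) at_top"
      using q by (intro tendsto_neg_powr) (auto intro!: lim_sub_top)
    from tendsto_minus[OF this] have "((\<lambda>z. - ((z-x) powr (-q))) \<longlongrightarrow> 0) at_top" by simp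
    from tendsto_divide_zero[OF this, of q] show ?thesis by simp
  qed
  have C: "isCont (\<lambda>z. (z-x) powr (-(1+q))) t" if "x+d < t" for t
    using that d by (auto intro!: continuous_intros)
  show "set_integrable lborel {x+d<..} (\<lambda>z. (z-x) powr (-(1+q)))"
    "(LINT z:{x+d<..}|lborel. (z-x) powr (-(1+q))) = d powr (-q) / q"
    using ftc_top[of "x+d" ?F "\<lambda>z. (z-x) powr (-(1+q))", OF D C _ A B] by auto
qed

lemma int_left_tail:
  fixes x d q :: real assumes q: "0 < q" and d: "0 < d"
  shows "set_integrable lborel {..<x-d} (\<lambda>z. (x-z) powr (-(1+q)))"
    "(LINT z:{..<x-d}|lborel. (x-z) powr (-(1+q))) = d powr (-q) / q"
proof -
  let ?F = "\<lambda>z. ((x-z) powr (-q)) / q"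
  have D: "DERIV ?F t :> (x-t) powr (-(1+q))" if "t < x-d" for t
    using that q d
    apply (auto intro!: derivative_eq_intros)
    apply (simp add: algebra_simps)
    apply (rule arg_cong[where f="\<lambda>e. (x-t) powr e"])
    apply simp
    done
  have B: "(?F \<longlongrightarrow> (d powr (-q)) / q) (at_left (x-d))"
    using d q by (auto intro!: tendsto_eq_intros)
  have A: "(?F \<longlongrightarrow> 0) at_bot"
  proof -
    have "((\<lambda>z. (x-z) powr (-q)) \<longlongrightarrow> 0) at_bot"
      using q by (intro tendsto_neg_powr) (auto intro!: lim_sub_bot)
    from tendsto_divide_zero[OF this, of q] show ?thesis by simp
  qed
  have C: "isCont (\<lambda>z. (x-z) powr (-(1+q))) t" if "t < x-d" for t
    using that d by (auto intro!: continuous_intros)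
  show "set_integrable lborel {..<x-d} (\<lambda>z. (x-z) powr (-(1+q)))"
    "(LINT z:{..<x-d}|lborel. (x-z) powr (-(1+q))) = d powr (-q) / q"
    using ftc_bot[of "x-d" ?F "\<lambda>z. (x-z) powr (-(1+q))", OF D C _ A B] by auto
qed

lemma int_near_right:
  fixes x d e q :: real assumes q: "q \<noteq> -1" and ed: "0 \<le> e" "e < d" and ok: "0 < e \<or> -1 < q"
  shows "set_integrable lborel {x+e<..<x+d} (\<lambda>z. (z-x) powr q)"
    "(LINT z:{x+e<..<x+d}|lborel. (z-x) powr q) = (d powr (q+1) - e powr (q+1)) / (q+1)"
proof -
  let ?F = "\<lambda>z. ((z-x) powr (q+1)) / (q+1)"
  have q1: "q + 1 \<noteq> 0" using q by linarith
  have D: "DERIV ?F t :> (t-x) powr q" if "x+e < t" "t < x+d" for t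
    using that q1 ed
    by (auto intro!: derivative_eq_intros)
  have B: "(?F \<longlongrightarrow> (d powr (q+1)) / (q+1)) (at_left (x+d))"
    using ed q1 by (auto intro!: tendsto_eq_intros)
  have A: "(?F \<longlongrightarrow> (e powr (q+1)) / (q+1)) (at_right (x+e))"
  proof (cases "e = 0")
    case True
    with ok have "0 < q + 1" by auto
    have "((\<lambda>z. (z-x) powr (q+1)) \<longlongrightarrow> 0) (at_right x)"
      by (rule tendsto_zero_powrI) (auto intro!: tendsto_eq_intros \<open>0 < q+1\<close> simp: eventually_at_right_less eventually_at_filter)
    from tendsto_divide[OF this tendsto_const[of "q+1"]] q1 True show ?thesis by simp
  next
    case False
    then show ?thesis using ed q1 by (auto intro!: tendsto_eq_intros)
  qed
  have C: "isCont (\<lambda>z. (z-x) powr q) t" if "x+e < t" for t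
    using that ed by (auto intro!: continuous_intros)
  show "set_integrable lborel {x+e<..<x+d} (\<lambda>z. (z-x) powr q)"
    "(LINT z:{x+e<..<x+d}|lborel. (z-x) powr q) = (d powr (q+1) - e powr (q+1)) / (q+1)"
    using ftc_fin[of "x+e" "x+d" ?F "\<lambda>z. (z-x) powr q", OF _ D C _ A B] ed by (auto simp: diff_divide_distrib)
qed

lemma int_near_left:
  fixes x d e q :: real assumes q: "q \<noteq> -1" and ed: "0 \<le> e" "e < d" and ok: "0 < e \<or> -1 < q"
  shows "set_integrable lborel {x-d<..<x-e} (\<lambda>z. (x-z) powr q)"
    "(LINT z:{x-d<..<x-e}|lborel. (x-z) powr q) = (d powr (q+1) - e powr (q+1)) / (q+1)"
proof -
  let ?F = "\<lambda>z. - ((x-z) powr (q+1)) / (q+1)"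
  have q1: "q + 1 \<noteq> 0" using q by linarith
  have D: "DERIV ?F t :> (x-t) powr q" if "x-d < t" "t < x-e" for t
    using that q1 ed
    by (auto intro!: derivative_eq_intros)
  have A: "(?F \<longlongrightarrow> - (d powr (q+1)) / (q+1)) (at_right (x-d))"
    using ed q1 by (auto intro!: tendsto_eq_intros)
  have B: "(?F \<longlongrightarrow> - (e powr (q+1)) / (q+1)) (at_left (x-e))"
  proof (cases "e = 0")
    case True
    with ok have "0 < q + 1" by auto
    have "((\<lambda>z. (x-z) powr (q+1)) \<longlongrightarrow> 0) (at_left x)"
      by (rule tendsto_zero_powrI) (auto intro!: tendsto_eq_intros \<open>0 < q+1\<close> simp: eventually_at_left_real eventually_at_filter)
    from tendsto_divide[OF tendsto_minus[OF this] tendsto_const[of "q+1"]] q1 True show ?thesis by simp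
  next
    case False
    then show ?thesis using ed q1 by (auto intro!: tendsto_eq_intros)
  qed
  have C: "isCont (\<lambda>z. (x-z) powr q) t" if "t < x-e" for t
    using that ed by (auto intro!: continuous_intros)
  show "set_integrable lborel {x-d<..<x-e} (\<lambda>z. (x-z) powr q)"
    "(LINT z:{x-d<..<x-e}|lborel. (x-z) powr q) = (d powr (q+1) - e powr (q+1)) / (q+1)"
    using ftc_fin[of "x-d" "x-e" ?F "\<lambda>z. (x-z) powr q", OF _ D C _ A B] ed by (auto simp: diff_divide_distrib)
qed




lemma sing:
  fixes f :: "real \<Rightarrow> real"
  shows "set_integrable lborel {a} f" "(LINT z:{a}|lborel. f z) = 0"
proof -
  have e: "(\<lambda>z. indicator {a} z *\<^sub>R f z) = (\<lambda>z. f a * indicator {a} z)"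
    by (auto simp: indicator_def fun_eq_iff)
  show "set_integrable lborel {a} f"
    unfolding set_integrable_def e by (intro integrable_mult_right integrable_real_indicator) auto
  show "(LINT z:{a}|lborel. f z) = 0"
    unfolding set_lebesgue_integral_def e by simp
qed

lemma acc:
  fixes f :: "real \<Rightarrow> real"
  assumes "set_integrable lborel A f" "set_integrable lborel B f" "A \<inter> B = {}"
    "A \<in> sets lborel" "B \<in> sets lborel"
  shows "set_integrable lborel (A \<union> B) f"
    "(LINT z:A\<union>B|lborel. f z) = (LINT z:A|lborel. f z) + (LINT z:B|lborel. f z)"
  using set_integrable_Un[OF assms(1,2,4,5)] set_integral_Un[OF assms(3,1,2)] by auto

lemma mvt_between:
  fixes f f' :: "real \<Rightarrow> real"
  assumes "\<And>t. t \<in> {a..b} \<Longrightarrow> DERIV f t :> f' t" "u \<in> {a..b}" "v \<in> {a..b}"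
  shows "\<exists>w. w \<in> {a..b} \<and> \<bar>w - v\<bar> \<le> \<bar>u - v\<bar> \<and> f u - f v = f' w * (u - v)"
proof (cases u v rule: linorder_cases)
  case less
  obtain w where "u < w" "w < v" "f v - f u = (v - u) * f' w"
    using MVT2[OF less, of f f'] assms by auto
  then show ?thesis using assms by (intro exI[of _ w]) (auto simp: algebra_simps)
next
  case equal then show ?thesis using assms by auto
next
  case greater
  obtain w where "v < w" "w < u" "f u - f v = (u - v) * f' w"
    using MVT2[OF greater, of f f'] assms by auto
  then show ?thesis using assms by (intro exI[of _ w]) (auto simp: algebra_simps)
qed

lemma lip:
  fixes f f' :: "real \<Rightarrow> real"
  assumes "\<And>t. t \<in> {a..b} \<Longrightarrow> DERIV f t :> f' t" "\<And>t. t \<in> {a..b} \<Longrightarrow> \<bar>f' t\<bar> \<le> M"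
    "u \<in> {a..b}" "v \<in> {a..b}"
  shows "\<bar>f u - f v\<bar> \<le> M * \<bar>u - v\<bar>"
proof -
  obtain w where w: "w \<in> {a..b}" "f u - f v = f' w * (u - v)"
    using mvt_between[OF assms(1,3,4)] by blast
  then show ?thesis using assms(2)[OF w(1)] by (simp add: abs_mult mult_right_mono)
qed

lemma taylor2:
  fixes g g1 g2 :: "real \<Rightarrow> real"
  assumes "\<And>t. t \<in> {a..b} \<Longrightarrow> DERIV g t :> g1 t" "\<And>t. t \<in> {a..b} \<Longrightarrow> DERIV g1 t :> g2 t"
    "\<And>t. t \<in> {a..b} \<Longrightarrow> \<bar>g2 t\<bar> \<le> M" "x \<in> {a..b}" "z \<in> {a..b}"
  shows "\<bar>g z - g x - g1 x * (z - x)\<bar> \<le> M * (z - x)^2"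
proof -
  obtain w where w: "w \<in> {a..b}" "\<bar>w - x\<bar> \<le> \<bar>z - x\<bar>" "g z - g x = g1 w * (z - x)"
    using mvt_between[OF assms(1,5,4)] by blast
  have "\<bar>g1 w - g1 x\<bar> \<le> M * \<bar>w - x\<bar>" using lip[OF assms(2,3) w(1) assms(4)] .
  have M: "0 \<le> M" using assms(3)[OF assms(4)] by linarith
  have "\<bar>g z - g x - g1 x * (z - x)\<bar> = \<bar>g1 w - g1 x\<bar> * \<bar>z - x\<bar>"
  proof -
    have "g z - g x - g1 x * (z - x) = (g1 w - g1 x) * (z - x)" using w(3) by (simp add: algebra_simps)
    then show ?thesis by (simp add: abs_mult)
  qed
  also have "\<dots> \<le> M * \<bar>w - x\<bar> * \<bar>z - x\<bar>"
    by (rule mult_right_mono) (fact, simp)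
  also have "\<dots> \<le> M * \<bar>z - x\<bar> * \<bar>z - x\<bar>"
    using M w(2) by (intro mult_right_mono mult_left_mono) auto
  also have "\<dots> = M * (z - x)^2" by (simp add: power2_eq_square abs_mult_self_eq)
  finally show ?thesis .
qed




lemma meas_set: "f \<in> borel_measurable lborel \<Longrightarrow> A \<in> sets lborel \<Longrightarrow> set_borel_measurable lborel A (f::real\<Rightarrow>real)"
  unfolding set_borel_measurable_def
  by (intro borel_measurable_scaleR borel_measurable_indicator) auto

lemma dom:
  fixes f g :: "real \<Rightarrow> real"
  assumes "set_integrable lborel A g" "f \<in> borel_measurable lborel" "A \<in> sets lborel"
    "\<And>z. z \<in> A \<Longrightarrow> \<bar>f z\<bar> \<le> g z"
  shows "set_integrable lborel A f" "\<bar>LINT z:A|lborel. f z\<bar> \<le> (LINT z:A|lborel. g z)"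
proof -
  show fi: "set_integrable lborel A f"
    by (rule set_integrable_bound[OF assms(1) meas_set[OF assms(2,3)]]) (use assms(4) in force)
  have "\<bar>LINT z:A|lborel. f z\<bar> \<le> (LINT z:A|lborel. \<bar>f z\<bar>)"
    using set_integral_norm_bound[OF fi] by simp
  also have "\<dots> \<le> (LINT z:A|lborel. g z)"
    by (rule set_integral_mono[OF set_integrable_abs[OF fi] assms(1)]) (use assms(4) in auto)
  finally show "\<bar>LINT z:A|lborel. f z\<bar> \<le> (LINT z:A|lborel. g z)" .
qed

locale LL =
  fixes \<alpha> \<beta> x :: real and \<phi> :: "real \<Rightarrow> real"
  assumes a1: "1/2 < \<alpha>" and a2: "\<alpha> < 1" and b1: "0 < \<beta>" and b2: "\<beta> < 1" and xb: "x \<le> -4"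
    and phi: "\<And>z. \<phi> z = (if z < -1 then \<bar>z\<bar> powr (- \<beta>) else 1)"
begin

definition "R = -x"
definition "d = R / 2"
definition "f z = (\<phi> x - \<phi> z) / \<bar>x - z\<bar> powr (1 + 2 * \<alpha>)"
definition "p = \<beta> * R powr (-\<beta>-1)"
definition "h z = f z + p * (z - x) / \<bar>x - z\<bar> powr (1 + 2 * \<alpha>)"
definition "M = 2 * d powr (-\<beta>-2)"

lemma phi_eq: "\<phi> = (\<lambda>z. if z < -1 then \<bar>z\<bar> powr (- \<beta>) else 1)"
  using phi by auto

lemma R4: "4 \<le> R" and d2: "2 \<le> d" and xR: "x = -R" and dR: "R = 2*d"
  using xb by (auto simp: R_def d_def)

lemma phi_neg: "z < -1 \<Longrightarrow> \<phi> z = (-z) powr (-\<beta>)"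
  by (simp add: phi)

lemma phix: "\<phi> x = R powr (-\<beta>)"
  using xb by (simp add: phi R_def)

lemma f_meas: "f \<in> borel_measurable lborel"
  unfolding f_def[abs_def] unfolding phi_eq by measurable

lemma h_meas: "h \<in> borel_measurable lborel"
  unfolding h_def[abs_def] f_def[abs_def] unfolding phi_eq by measurable

lemma P1:
  shows "set_integrable lborel {..<x-d} f"
    "\<bar>LINT z:{..<x-d}|lborel. f z\<bar> \<le> R powr (-\<beta>) * (d powr (-(2*\<alpha>)) / (2*\<alpha>))"
proof -
  let ?g = "\<lambda>z. R powr (-\<beta>) * (x-z) powr (-(1+2*\<alpha>))"
  have q: "0 < 2*\<alpha>" using a1 by simp
  have d0: "0 < d" using d2 by simp
  note T = int_left_tail[OF q d0, of x]
  have gi: "set_integrable lborel {..<x-d} ?g" using T(1) by simp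
  have gv: "(LINT z:{..<x-d}|lborel. ?g z) = R powr (-\<beta>) * (d powr (-(2*\<alpha>)) / (2*\<alpha>))"
    using T(2) by simp
  have pw: "\<bar>f z\<bar> \<le> ?g z" if z: "z \<in> {..<x-d}" for z
  proof -
    have z1: "z < -1" "R < -z" "0 < x - z" using z d2 xR R4 by auto
    have e1: "\<phi> z = (-z) powr (-\<beta>)" using phi_neg z1 by simp
    have le: "(-z) powr (-\<beta>) \<le> R powr (-\<beta>)"
      using z1 R4 b1 by (intro powr_mono2') auto
    have ge: "0 \<le> (-z) powr (-\<beta>)" by simp
    have ax: "\<bar>x - z\<bar> = x - z" using z1 by simp
    have "\<bar>f z\<bar> = (R powr (-\<beta>) - (-z) powr (-\<beta>)) / (x - z) powr (1 + 2*\<alpha>)"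
      unfolding f_def e1 phix ax using le by simp
    also have "\<dots> \<le> R powr (-\<beta>) / (x - z) powr (1 + 2*\<alpha>)"
      using ge z1 by (intro divide_right_mono) auto
    also have "\<dots> = ?g z" by (simp only: powr_minus divide_inverse)
    finally show ?thesis .
  qed
  show "set_integrable lborel {..<x-d} f"
    "\<bar>LINT z:{..<x-d}|lborel. f z\<bar> \<le> R powr (-\<beta>) * (d powr (-(2*\<alpha>)) / (2*\<alpha>))"
    using dom[OF gi f_meas _ pw] gv by auto
qed

lemma P4:
  shows "set_integrable lborel {x+d<..<-1} f"
    "\<bar>LINT z:{x+d<..<-1}|lborel. f z\<bar> \<le> d powr (-(1+2*\<alpha>)) * ((d powr (1-\<beta>) - 1) / (1-\<beta>))"
proof -
  let ?g = "\<lambda>z. d powr (-(1+2*\<alpha>)) * (-z) powr (-\<beta>)"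
  have d1: "1 < d" using d2 by simp
  note T = int_near_left[of "-\<beta>" 1 d 0, OF _ _ d1]
  have xd: "x + d = 0 - d" using xR dR by simp
  have gi0: "set_integrable lborel {0-d<..<0-1} (\<lambda>z. (0-z) powr (-\<beta>))" using T(1) b2 by simp
  have gi: "set_integrable lborel {x+d<..<-1} ?g" unfolding xd using gi0 by simp
  have gv: "(LINT z:{x+d<..<-1}|lborel. ?g z) = d powr (-(1+2*\<alpha>)) * ((d powr (1-\<beta>) - 1) / (1-\<beta>))"
    unfolding xd using T(2) b2 by simp
  have pw: "\<bar>f z\<bar> \<le> ?g z" if z: "z \<in> {x+d<..<-1}" for z
  proof -
    have z1: "z < -1" "-z < R" "d < z - x" using z d2 xR dR by auto
    have e1: "\<phi> z = (-z) powr (-\<beta>)" using phi_neg z1 by simp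
    have le: "R powr (-\<beta>) \<le> (-z) powr (-\<beta>)"
      using z1 R4 b1 by (intro powr_mono2') auto
    have ge: "0 \<le> R powr (-\<beta>)" by simp
    have ax: "\<bar>x - z\<bar> = z - x" using z1 d2 by simp
    have dp: "d powr (1 + 2*\<alpha>) \<le> (z - x) powr (1 + 2*\<alpha>)"
      using z1 d2 a1 by (intro powr_mono2) auto
    have dp0: "0 < d powr (1 + 2*\<alpha>)" using d2 by simp
    have "\<bar>f z\<bar> = ((-z) powr (-\<beta>) - R powr (-\<beta>)) / (z - x) powr (1 + 2*\<alpha>)"
      unfolding f_def e1 phix ax using le by (simp add: abs_minus_commute)
    also have "\<dots> \<le> (-z) powr (-\<beta>) / (z - x) powr (1 + 2*\<alpha>)"
      using ge z1 by (intro divide_right_mono) auto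
    also have "\<dots> \<le> (-z) powr (-\<beta>) / d powr (1 + 2*\<alpha>)"
      using dp dp0 z1 d2 by (intro divide_left_mono) (auto intro!: mult_pos_pos)
    also have "\<dots> = ?g z" by (simp only: powr_minus divide_inverse mult.commute)
    finally show ?thesis .
  qed
  show "set_integrable lborel {x+d<..<-1} f"
    "\<bar>LINT z:{x+d<..<-1}|lborel. f z\<bar> \<le> d powr (-(1+2*\<alpha>)) * ((d powr (1-\<beta>) - 1) / (1-\<beta>))"
    using dom[OF gi f_meas _ pw] gv by auto
qed

lemma P5:
  shows "set_integrable lborel {-1<..} f"
    "(LINT z:{-1<..}|lborel. f z) = (R powr (-\<beta>) - 1) * ((R-1) powr (-(2*\<alpha>)) / (2*\<alpha>))"
proof -
  have q: "0 < 2*\<alpha>" using a1 by simp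
  have r0: "0 < R - 1" using R4 by simp
  note T = int_right_tail[OF q r0, of x]
  have xr: "x + (R - 1) = -1" using xR by simp
  have eq: "f z = (R powr (-\<beta>) - 1) * (z - x) powr (-(1+2*\<alpha>))" if "z \<in> {-1<..}" for z
  proof -
    have z1: "\<not> z < -1" "\<bar>x - z\<bar> = z - x" using that xb by auto
    have "f z = (R powr (-\<beta>) - 1) / (z-x) powr (1+2*\<alpha>)" unfolding f_def phix using z1 by (simp add: phi)
    then show ?thesis by (simp only: powr_minus divide_inverse)
  qed
  have gi: "set_integrable lborel {-1<..} (\<lambda>z. (R powr (-\<beta>) - 1) * (z - x) powr (-(1+2*\<alpha>)))"
    using T(1) unfolding xr by simp
  show "set_integrable lborel {-1<..} f"
    using gi by (rule set_integrable_cong[THEN iffD1, rotated -1]) (auto simp: eq)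
  have "(LINT z:{-1<..}|lborel. f z) = (LINT z:{-1<..}|lborel. (R powr (-\<beta>) - 1) * (z - x) powr (-(1+2*\<alpha>)))"
    by (rule set_lebesgue_integral_cong) (auto simp: eq)
  also have "\<dots> = (R powr (-\<beta>) - 1) * ((R-1) powr (-(2*\<alpha>)) / (2*\<alpha>))"
    using T(2) unfolding xr by simp
  finally show "(LINT z:{-1<..}|lborel. f z) = (R powr (-\<beta>) - 1) * ((R-1) powr (-(2*\<alpha>)) / (2*\<alpha>))" .
qed

lemma taylor_phi:
  assumes z: "z \<in> {x-d..x+d}"
  shows "\<bar>\<phi> x - \<phi> z + p * (z - x)\<bar> \<le> M * (z - x)^2"
proof -
  let ?g = "\<lambda>t. (-t) powr (-\<beta>)"
  let ?g1 = "\<lambda>t. \<beta> * (-t) powr (-\<beta>-1)"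
  let ?g2 = "\<lambda>t. \<beta> * (\<beta>+1) * (-t) powr (-\<beta>-2)"
  have I: "t < 0" "d \<le> -t" if "t \<in> {x-d..x+d}" for t using that xR dR d2 by auto
  have D1: "DERIV ?g t :> ?g1 t" if "t \<in> {x-d..x+d}" for t
    using I[OF that] by (auto intro!: derivative_eq_intros simp: algebra_simps)
  have D2: "DERIV ?g1 t :> ?g2 t" if "t \<in> {x-d..x+d}" for t
    using I[OF that] by (auto intro!: derivative_eq_intros simp: algebra_simps)
  have B: "\<bar>?g2 t\<bar> \<le> M" if "t \<in> {x-d..x+d}" for t
  proof -
    have "(-t) powr (-\<beta>-2) \<le> d powr (-\<beta>-2)"
      using I[OF that] d2 b1 by (intro powr_mono2') auto
    moreover have "\<beta> * (\<beta>+1) \<le> 2" proof -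
      have 1: "\<beta> * \<beta> \<le> 1 * 1" by (rule mult_mono) (use b1 b2 in auto)
      have 2: "\<beta> * (\<beta>+1) = \<beta> * \<beta> + \<beta>" by (simp add: distrib_left)
      show ?thesis unfolding 2 using 1 b2 by linarith
    qed
    moreover have "0 \<le> \<beta> * (\<beta>+1)" using b1 by simp
    ultimately have "\<beta> * (\<beta>+1) * (-t) powr (-\<beta>-2) \<le> 2 * d powr (-\<beta>-2)"
      by (intro mult_mono) auto
    moreover have "0 \<le> \<beta> * (\<beta>+1) * (-t) powr (-\<beta>-2)" using b1 by (intro mult_nonneg_nonneg) auto
    ultimately show ?thesis unfolding M_def by linarith
  qed
  have xi: "x \<in> {x-d..x+d}" using d2 by auto
  have T: "\<bar>?g z - ?g x - ?g1 x * (z - x)\<bar> \<le> M * (z - x)^2"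
    by (rule taylor2[OF D1 D2 B xi z])
  have ez: "\<phi> z = ?g z" using I[OF z] d2 by (simp add: phi_neg)
  have ex: "\<phi> x = ?g x" using xb by (simp add: phi_neg)
  have ep: "?g1 x = p" by (simp add: p_def R_def)
  have "\<phi> x - \<phi> z + p * (z - x) = - (?g z - ?g x - ?g1 x * (z - x))"
    unfolding ez ex ep by simp
  then show ?thesis using T by simp
qed


lemma hbound:
  assumes z: "z \<in> {x-d<..<x+d}" "z \<noteq> x"
  shows "\<bar>h z\<bar> \<le> M * \<bar>z - x\<bar> powr (1 - 2*\<alpha>)"
proof -
  have hz: "h z = (\<phi> x - \<phi> z + p * (z - x)) / \<bar>x - z\<bar> powr (1 + 2*\<alpha>)"
    unfolding h_def f_def by (simp add: add_divide_distrib)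
  have pos: "0 < \<bar>x - z\<bar> powr (1 + 2*\<alpha>)" using z by simp
  have "\<bar>h z\<bar> \<le> M * (z - x)^2 / \<bar>x - z\<bar> powr (1 + 2*\<alpha>)"
    unfolding hz abs_divide using taylor_phi[of z] z pos by (auto intro!: divide_right_mono)
  also have "\<dots> = M * \<bar>z - x\<bar> powr (1 - 2*\<alpha>)"
  proof -
    have a: "(z - x)^2 = \<bar>z - x\<bar> powr 2" using z by (simp add: powr_numeral)
    have b: "\<bar>x - z\<bar> = \<bar>z - x\<bar>" by simp
    have c: "\<bar>z - x\<bar> powr (1 - 2*\<alpha>) = \<bar>z - x\<bar> powr 2 / \<bar>z - x\<bar> powr (1 + 2*\<alpha>)"
      by (subst powr_diff[symmetric]) simp
    show ?thesis unfolding a b c by simp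
  qed
  finally show ?thesis .
qed

end



context LL begin

lemma PHr:
  assumes e: "0 < e" "e \<le> d"
  shows "set_integrable lborel {x<..<x+e} h"
    "\<bar>LINT z:{x<..<x+e}|lborel. h z\<bar> \<le> M * (e powr (2 - 2*\<alpha>) / (2 - 2*\<alpha>))"
proof -
  let ?g = "\<lambda>z. M * (z - x) powr (1 - 2*\<alpha>)"
  note T = int_near_right[of "1 - 2*\<alpha>" 0 e x]
  have c: "1 - 2*\<alpha> \<noteq> -1" "-1 < 1 - 2*\<alpha>" using a2 by auto
  have gi: "set_integrable lborel {x<..<x+e} ?g" using T(1)[OF c(1) _ e(1)] c(2) by simp
  have gv: "(LINT z:{x<..<x+e}|lborel. ?g z) = M * (e powr (2 - 2*\<alpha>) / (2 - 2*\<alpha>))"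
  proof -
    have "(LINT z:{x<..<x+e}|lborel. (z - x) powr (1 - 2*\<alpha>)) = e powr (2 - 2*\<alpha>) / (2 - 2*\<alpha>)"
      using T(2)[OF c(1) _ e(1)] c(2) by (simp add: algebra_simps)
    then show ?thesis by simp
  qed
  have pw: "\<bar>h z\<bar> \<le> ?g z" if z: "z \<in> {x<..<x+e}" for z
  proof -
    have "z \<in> {x-d<..<x+d}" "z \<noteq> x" using z e d2 by auto
    from hbound[OF this] show ?thesis using z by simp
  qed
  show "set_integrable lborel {x<..<x+e} h"
    "\<bar>LINT z:{x<..<x+e}|lborel. h z\<bar> \<le> M * (e powr (2 - 2*\<alpha>) / (2 - 2*\<alpha>))"
    using dom[OF gi h_meas _ pw] gv by auto
qed

lemma PHl:
  assumes e: "0 < e" "e \<le> d"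
  shows "set_integrable lborel {x-e<..<x} h"
    "\<bar>LINT z:{x-e<..<x}|lborel. h z\<bar> \<le> M * (e powr (2 - 2*\<alpha>) / (2 - 2*\<alpha>))"
proof -
  let ?g = "\<lambda>z. M * (x - z) powr (1 - 2*\<alpha>)"
  note T = int_near_left[of "1 - 2*\<alpha>" 0 e x]
  have c: "1 - 2*\<alpha> \<noteq> -1" "-1 < 1 - 2*\<alpha>" using a2 by auto
  have gi: "set_integrable lborel {x-e<..<x} ?g" using T(1)[OF c(1) _ e(1)] c(2) by simp
  have gv: "(LINT z:{x-e<..<x}|lborel. ?g z) = M * (e powr (2 - 2*\<alpha>) / (2 - 2*\<alpha>))"
  proof -
    have "(LINT z:{x-e<..<x}|lborel. (x - z) powr (1 - 2*\<alpha>)) = e powr (2 - 2*\<alpha>) / (2 - 2*\<alpha>)"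
      using T(2)[OF c(1) _ e(1)] c(2) by (simp add: algebra_simps)
    then show ?thesis by simp
  qed
  have pw: "\<bar>h z\<bar> \<le> ?g z" if z: "z \<in> {x-e<..<x}" for z
  proof -
    have "z \<in> {x-d<..<x+d}" "z \<noteq> x" using z e d2 by auto
    from hbound[OF this] show ?thesis using z by simp
  qed
  show "set_integrable lborel {x-e<..<x} h"
    "\<bar>LINT z:{x-e<..<x}|lborel. h z\<bar> \<le> M * (e powr (2 - 2*\<alpha>) / (2 - 2*\<alpha>))"
    using dom[OF gi h_meas _ pw] gv by auto
qed

lemma wpow: "0 < (w::real) \<Longrightarrow> w / w powr (1 + 2*\<alpha>) = w powr (-(2*\<alpha>))"
proof -
  assume w: "0 < w"
  have "w powr (-(2*\<alpha>)) = w powr 1 / w powr (1 + 2*\<alpha>)"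
    by (subst powr_diff[symmetric]) simp
  then show ?thesis using w by simp
qed

lemma PO:
  assumes e: "0 < e" "e < d"
  shows "set_integrable lborel {x-d<..<x-e} f" "set_integrable lborel {x+e<..<x+d} f"
    "(LINT z:{x-d<..<x-e}|lborel. f z) + (LINT z:{x+e<..<x+d}|lborel. f z)
     = (LINT z:{x-d<..<x-e}|lborel. h z) + (LINT z:{x+e<..<x+d}|lborel. h z)"
proof -
  have c: "-(2*\<alpha>) \<noteq> -1" using a1 by auto
  note TL = int_near_left[OF c, of e d x] and TR = int_near_right[OF c, of e d x]
  have hl: "set_integrable lborel {x-d<..<x-e} h"
    using PHl(1)[of d] d2 e by (rule_tac set_integrable_subset) auto
  have hr: "set_integrable lborel {x+e<..<x+d} h"
    using PHr(1)[of d] d2 e by (rule_tac set_integrable_subset) auto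
  have ol: "set_integrable lborel {x-d<..<x-e} (\<lambda>z. (x-z) powr (-(2*\<alpha>)))" using TL(1) e by simp
  have or: "set_integrable lborel {x+e<..<x+d} (\<lambda>z. (z-x) powr (-(2*\<alpha>)))" using TR(1) e by simp
  have eql: "f z = h z + p * (x-z) powr (-(2*\<alpha>))" if "z \<in> {x-d<..<x-e}" for z
  proof -
    have w: "0 < x - z" "\<bar>x - z\<bar> = x - z" using that e by auto
    have "p * (z - x) / \<bar>x - z\<bar> powr (1 + 2*\<alpha>) = - p * ((x-z) / (x-z) powr (1 + 2*\<alpha>))"
      unfolding w(2) by (simp add: algebra_simps)
    also have "\<dots> = - p * (x-z) powr (-(2*\<alpha>))" using wpow[OF w(1)] by simp
    finally show ?thesis unfolding h_def by simp
  qed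
  have eqr: "f z = h z - p * (z-x) powr (-(2*\<alpha>))" if "z \<in> {x+e<..<x+d}" for z
  proof -
    have w: "0 < z - x" "\<bar>x - z\<bar> = z - x" using that e by auto
    have "p * (z - x) / \<bar>x - z\<bar> powr (1 + 2*\<alpha>) = p * ((z-x) / (z-x) powr (1 + 2*\<alpha>))"
      unfolding w(2) by (simp add: algebra_simps)
    also have "\<dots> = p * (z-x) powr (-(2*\<alpha>))" using wpow[OF w(1)] by simp
    finally show ?thesis unfolding h_def by simp
  qed
  have il: "set_integrable lborel {x-d<..<x-e} (\<lambda>z. h z + p * (x-z) powr (-(2*\<alpha>)))"
    using hl ol by auto
  have ir: "set_integrable lborel {x+e<..<x+d} (\<lambda>z. h z - p * (z-x) powr (-(2*\<alpha>)))"
    using hr or by auto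
  show "set_integrable lborel {x-d<..<x-e} f"
    using il by (rule set_integrable_cong[THEN iffD1, rotated -1]) (auto simp: eql)
  show "set_integrable lborel {x+e<..<x+d} f"
    using ir by (rule set_integrable_cong[THEN iffD1, rotated -1]) (auto simp: eqr)
  have vl: "(LINT z:{x-d<..<x-e}|lborel. f z) = (LINT z:{x-d<..<x-e}|lborel. h z) + p * (LINT z:{x-d<..<x-e}|lborel. (x-z) powr (-(2*\<alpha>)))"
  proof -
    have "(LINT z:{x-d<..<x-e}|lborel. f z) = (LINT z:{x-d<..<x-e}|lborel. h z + p * (x-z) powr (-(2*\<alpha>)))"
      by (rule set_lebesgue_integral_cong) (auto simp: eql)
    also have "\<dots> = (LINT z:{x-d<..<x-e}|lborel. h z) + p * (LINT z:{x-d<..<x-e}|lborel. (x-z) powr (-(2*\<alpha>)))"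
      using hl ol by (simp add: set_integral_add)
    finally show ?thesis .
  qed
  have vr: "(LINT z:{x+e<..<x+d}|lborel. f z) = (LINT z:{x+e<..<x+d}|lborel. h z) - p * (LINT z:{x+e<..<x+d}|lborel. (z-x) powr (-(2*\<alpha>)))"
  proof -
    have "(LINT z:{x+e<..<x+d}|lborel. f z) = (LINT z:{x+e<..<x+d}|lborel. h z - p * (z-x) powr (-(2*\<alpha>)))"
      by (rule set_lebesgue_integral_cong) (auto simp: eqr)
    also have "\<dots> = (LINT z:{x+e<..<x+d}|lborel. h z) - p * (LINT z:{x+e<..<x+d}|lborel. (z-x) powr (-(2*\<alpha>)))"
      using hr or by (simp add: set_integral_diff)
    finally show ?thesis .
  qed
  have same: "(LINT z:{x-d<..<x-e}|lborel. (x-z) powr (-(2*\<alpha>))) = (LINT z:{x+e<..<x+d}|lborel. (z-x) powr (-(2*\<alpha>)))"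
    using TL(2) TR(2) e by simp
  show "(LINT z:{x-d<..<x-e}|lborel. f z) + (LINT z:{x+e<..<x+d}|lborel. f z)
     = (LINT z:{x-d<..<x-e}|lborel. h z) + (LINT z:{x+e<..<x+d}|lborel. h z)"
    unfolding vl vr same by simp
qed

lemma acc3:
  fixes f :: "real \<Rightarrow> real"
  assumes "set_integrable lborel A f" "(LINT z:A|lborel. f z) = a"
    "set_integrable lborel B f" "(LINT z:B|lborel. f z) = b"
    "A \<inter> B = {}" "A \<in> sets lborel" "B \<in> sets lborel"
  shows "set_integrable lborel (A \<union> B) f \<and> (LINT z:A\<union>B|lborel. f z) = a + b"
  using acc[OF assms(1,3,5,6,7)] assms(2,4) by simp

definition "I1 = (LINT z:{..<x-d}|lborel. f z)"
definition "I4 = (LINT z:{x+d<..<-1}|lborel. f z)"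
definition "I5 = (LINT z:{-1<..}|lborel. f z)"

lemma trunc_eq:
  assumes e: "0 < e" "e < d"
  shows "set_integrable lborel {z. e < \<bar>x - z\<bar>} f"
    "(LINT z:{z. e < \<bar>x - z\<bar>}|lborel. f z) = I1 + I4 + I5
       + ((LINT z:{x-d<..<x-e}|lborel. h z) + (LINT z:{x+e<..<x+d}|lborel. h z))"
proof -
  have dd: "x + d < -1" "x - d < x + d" using xR dR d2 by auto
  have seq: "{z. e < \<bar>x - z\<bar>} = {..<x-d} \<union> {x-d} \<union> {x-d<..<x-e} \<union> {x+e<..<x+d} \<union> {x+d}
      \<union> {x+d<..<-1} \<union> {-1} \<union> {-1<..}"
    using e dd by auto
  note po = PO[OF e]
  have A1: "set_integrable lborel ({..<x-d} \<union> {x-d}) f \<and> (LINT z:{..<x-d} \<union> {x-d}|lborel. f z) = I1"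
    using acc3[OF P1(1) refl sing(1) sing(2)] by (auto simp: I1_def)
  have A2: "set_integrable lborel ({..<x-d} \<union> {x-d} \<union> {x-d<..<x-e}) f \<and>
     (LINT z:{..<x-d} \<union> {x-d} \<union> {x-d<..<x-e}|lborel. f z) = I1 + (LINT z:{x-d<..<x-e}|lborel. f z)"
    by (rule acc3[OF A1[THEN conjunct1] A1[THEN conjunct2] po(1) refl]) (use e in auto)
  have A3: "set_integrable lborel ({..<x-d} \<union> {x-d} \<union> {x-d<..<x-e} \<union> {x+e<..<x+d}) f \<and>
     (LINT z:{..<x-d} \<union> {x-d} \<union> {x-d<..<x-e} \<union> {x+e<..<x+d}|lborel. f z) = I1 + (LINT z:{x-d<..<x-e}|lborel. f z) + (LINT z:{x+e<..<x+d}|lborel. f z)"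
    by (rule acc3[OF A2[THEN conjunct1] A2[THEN conjunct2] po(2) refl]) (use e in auto)
  have A4: "set_integrable lborel ({..<x-d} \<union> {x-d} \<union> {x-d<..<x-e} \<union> {x+e<..<x+d} \<union> {x+d}) f \<and>
     (LINT z:{..<x-d} \<union> {x-d} \<union> {x-d<..<x-e} \<union> {x+e<..<x+d} \<union> {x+d}|lborel. f z) = I1 + (LINT z:{x-d<..<x-e}|lborel. f z) + (LINT z:{x+e<..<x+d}|lborel. f z)"
    using acc3[OF A3[THEN conjunct1] A3[THEN conjunct2] sing(1) sing(2)] e by auto
  have A5: "set_integrable lborel ({..<x-d} \<union> {x-d} \<union> {x-d<..<x-e} \<union> {x+e<..<x+d} \<union> {x+d} \<union> {x+d<..<-1}) f \<and>
     (LINT z:{..<x-d} \<union> {x-d} \<union> {x-d<..<x-e} \<union> {x+e<..<x+d} \<union> {x+d} \<union> {x+d<..<-1}|lborel. f z) = I1 + (LINT z:{x-d<..<x-e}|lborel. f z) + (LINT z:{x+e<..<x+d}|lborel. f z) + I4"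
    by (rule acc3[OF A4[THEN conjunct1] A4[THEN conjunct2] P4(1)]) (use e in \<open>auto simp: I4_def\<close>)
  have A6: "set_integrable lborel ({..<x-d} \<union> {x-d} \<union> {x-d<..<x-e} \<union> {x+e<..<x+d} \<union> {x+d} \<union> {x+d<..<-1} \<union> {-1}) f \<and>
     (LINT z:{..<x-d} \<union> {x-d} \<union> {x-d<..<x-e} \<union> {x+e<..<x+d} \<union> {x+d} \<union> {x+d<..<-1} \<union> {-1}|lborel. f z) = I1 + (LINT z:{x-d<..<x-e}|lborel. f z) + (LINT z:{x+e<..<x+d}|lborel. f z) + I4"
    using acc3[OF A5[THEN conjunct1] A5[THEN conjunct2] sing(1) sing(2)] e dd by auto
  have A7: "set_integrable lborel ({..<x-d} \<union> {x-d} \<union> {x-d<..<x-e} \<union> {x+e<..<x+d} \<union> {x+d} \<union> {x+d<..<-1} \<union> {-1} \<union> {-1<..}) f \<and>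
     (LINT z:{..<x-d} \<union> {x-d} \<union> {x-d<..<x-e} \<union> {x+e<..<x+d} \<union> {x+d} \<union> {x+d<..<-1} \<union> {-1} \<union> {-1<..}|lborel. f z) = I1 + (LINT z:{x-d<..<x-e}|lborel. f z) + (LINT z:{x+e<..<x+d}|lborel. f z) + I4 + I5"
    by (rule acc3[OF A6[THEN conjunct1] A6[THEN conjunct2] P5(1)]) (use e dd in \<open>auto simp: I5_def\<close>)
  show "set_integrable lborel {z. e < \<bar>x - z\<bar>} f" unfolding seq using A7 by simp
  show "(LINT z:{z. e < \<bar>x - z\<bar>}|lborel. f z) = I1 + I4 + I5
       + ((LINT z:{x-d<..<x-e}|lborel. h z) + (LINT z:{x+e<..<x+d}|lborel. h z))"
    unfolding seq using A7 po(3) by simp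
qed

end



context LL begin

definition "H2 = (LINT z:{x-d<..<x}|lborel. h z)"
definition "H3 = (LINT z:{x<..<x+d}|lborel. h z)"
definition "Lv = I1 + I4 + I5 + H2 + H3"

lemma split_l:
  assumes e: "0 < e" "e < d"
  shows "(LINT z:{x-d<..<x-e}|lborel. h z) = H2 - (LINT z:{x-e<..<x}|lborel. h z)"
proof -
  have hi: "set_integrable lborel {x-d<..<x} h" using PHl(1)[of d] d2 by simp
  have i1: "set_integrable lborel {x-d<..<x-e} h" using hi e by (rule_tac set_integrable_subset) auto
  have i2: "set_integrable lborel {x-e<..<x} h" using hi e by (rule_tac set_integrable_subset) auto
  have seq: "{x-d<..<x} = {x-d<..<x-e} \<union> {x-e} \<union> {x-e<..<x}" using e by auto
  have "H2 = (LINT z:{x-d<..<x-e}|lborel. h z) + 0 + (LINT z:{x-e<..<x}|lborel. h z)"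
  proof -
    have a: "set_integrable lborel ({x-d<..<x-e} \<union> {x-e}) h \<and> (LINT z:{x-d<..<x-e} \<union> {x-e}|lborel. h z) = (LINT z:{x-d<..<x-e}|lborel. h z) + 0"
      by (rule acc3[OF i1 refl sing(1) sing(2)]) auto
    have "(LINT z:{x-d<..<x-e} \<union> {x-e} \<union> {x-e<..<x}|lborel. h z) = (LINT z:{x-d<..<x-e}|lborel. h z) + 0 + (LINT z:{x-e<..<x}|lborel. h z)"
      by (rule acc3[OF a[THEN conjunct1] a[THEN conjunct2] i2 refl, THEN conjunct2]) (use e in auto)
    then show ?thesis unfolding H2_def seq .
  qed
  then show ?thesis by simp
qed

lemma split_r:
  assumes e: "0 < e" "e < d"
  shows "(LINT z:{x+e<..<x+d}|lborel. h z) = H3 - (LINT z:{x<..<x+e}|lborel. h z)"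
proof -
  have hi: "set_integrable lborel {x<..<x+d} h" using PHr(1)[of d] d2 by simp
  have i1: "set_integrable lborel {x+e<..<x+d} h" using hi e by (rule_tac set_integrable_subset) auto
  have i2: "set_integrable lborel {x<..<x+e} h" using hi e by (rule_tac set_integrable_subset) auto
  have seq: "{x<..<x+d} = {x<..<x+e} \<union> {x+e} \<union> {x+e<..<x+d}" using e by auto
  have "H3 = (LINT z:{x<..<x+e}|lborel. h z) + 0 + (LINT z:{x+e<..<x+d}|lborel. h z)"
  proof -
    have a: "set_integrable lborel ({x<..<x+e} \<union> {x+e}) h \<and> (LINT z:{x<..<x+e} \<union> {x+e}|lborel. h z) = (LINT z:{x<..<x+e}|lborel. h z) + 0"
      by (rule acc3[OF i2 refl sing(1) sing(2)]) auto
    have "(LINT z:{x<..<x+e} \<union> {x+e} \<union> {x+e<..<x+d}|lborel. h z) = (LINT z:{x<..<x+e}|lborel. h z) + 0 + (LINT z:{x+e<..<x+d}|lborel. h z)"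
      by (rule acc3[OF a[THEN conjunct1] a[THEN conjunct2] i1 refl, THEN conjunct2]) (use e in auto)
    then show ?thesis unfolding H3_def seq .
  qed
  then show ?thesis by simp
qed

lemma trunc_lim:
  "((\<lambda>e. LINT z:{z. e < \<bar>x - z\<bar>}|lborel. f z) \<longlongrightarrow> Lv) (at_right 0)"
proof -
  let ?C = "2 * M / (2 - 2*\<alpha>)"
  have ev: "eventually (\<lambda>e. norm ((LINT z:{z. e < \<bar>x - z\<bar>}|lborel. f z) - Lv) \<le> ?C * e powr (2 - 2*\<alpha>)) (at_right 0)"
  proof -
    have "eventually (\<lambda>e. 0 < e \<and> e < d) (at_right 0)"
      using d2 eventually_at_right_real[of 0 d] by simp
    then show ?thesis
    proof eventually_elim
      case (elim e)
      then have e: "0 < e" "e < d" by auto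
      have "(LINT z:{z. e < \<bar>x - z\<bar>}|lborel. f z) - Lv =
          - ((LINT z:{x-e<..<x}|lborel. h z) + (LINT z:{x<..<x+e}|lborel. h z))"
        unfolding trunc_eq(2)[OF e] split_l[OF e] split_r[OF e] Lv_def by simp
      moreover have "\<bar>LINT z:{x-e<..<x}|lborel. h z\<bar> \<le> M * (e powr (2 - 2*\<alpha>) / (2 - 2*\<alpha>))"
        using PHl(2)[of e] e by simp
      moreover have "\<bar>LINT z:{x<..<x+e}|lborel. h z\<bar> \<le> M * (e powr (2 - 2*\<alpha>) / (2 - 2*\<alpha>))"
        using PHr(2)[of e] e by simp
      moreover have "M * (e powr (2 - 2*\<alpha>) / (2 - 2*\<alpha>)) + M * (e powr (2 - 2*\<alpha>) / (2 - 2*\<alpha>)) = ?C * e powr (2 - 2*\<alpha>)"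
        by (simp add: field_simps)
      ultimately show ?case by (simp del: Groups.add_uminus_conv_diff)
    qed
  qed
  have z: "((\<lambda>e. ?C * e powr (2 - 2*\<alpha>)) \<longlongrightarrow> 0) (at_right 0)"
  proof -
    have "((\<lambda>e::real. e powr (2 - 2*\<alpha>)) \<longlongrightarrow> 0) (at_right 0)"
      using a2 by (intro tendsto_zero_powrI) (auto intro!: tendsto_eq_intros simp: eventually_at_filter)
    from tendsto_mult_right_zero[OF this, of ?C] show ?thesis by simp
  qed
  show ?thesis
    using Lim_null_comparison[OF ev z] by (simp add: Lim_null[symmetric])
qed

lemma Lbound:
  "\<bar>Lv + R powr (-(2*\<alpha>)) / (2*\<alpha>)\<bar> \<le>
     (1/(2*\<alpha>) + 1/(1-\<beta>) + 4/(2-2*\<alpha>) + (1+2*\<alpha>)/(2*\<alpha>)) * d powr (-(\<beta>+2*\<alpha>))"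
proof -
  define E where "E = d powr (-(\<beta>+2*\<alpha>))"
  have d0: "0 < d" using d2 by simp
  have a0: "0 < 2*\<alpha>" using a1 by simp
  have e1: "d powr (-\<beta>) * d powr (-(2*\<alpha>)) = E" unfolding E_def powr_add[symmetric] by (rule arg_cong[where f="\<lambda>e. d powr e"]) simp
  have e2: "d powr (-(1+2*\<alpha>)) * d powr (1-\<beta>) = E" unfolding E_def powr_add[symmetric] by (rule arg_cong[where f="\<lambda>e. d powr e"]) simp
  have e3: "d powr (-\<beta>-2) * d powr (2-2*\<alpha>) = E" unfolding E_def powr_add[symmetric] by (rule arg_cong[where f="\<lambda>e. d powr e"]) simp
  have Rd: "R powr (-\<beta>) \<le> d powr (-\<beta>)" using dR d0 b1 by (intro powr_mono2') auto
  have R1d: "(R-1) powr (-(2*\<alpha>)) \<le> d powr (-(2*\<alpha>))" using dR d2 a1 by (intro powr_mono2') auto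
  have Ed: "R powr (-\<beta>) * d powr (-(2*\<alpha>)) \<le> E"
    unfolding e1[symmetric] using Rd by (intro mult_right_mono) auto
  have hI1: "\<bar>I1\<bar> \<le> E/(2*\<alpha>)"
  proof -
    have "\<bar>I1\<bar> \<le> R powr (-\<beta>) * (d powr (-(2*\<alpha>)) / (2*\<alpha>))" using P1(2) by (simp add: I1_def)
    also have "\<dots> = (R powr (-\<beta>) * d powr (-(2*\<alpha>))) / (2*\<alpha>)" by simp
    also have "\<dots> \<le> E/(2*\<alpha>)" using Ed a0 by (intro divide_right_mono) auto
    finally show ?thesis .
  qed
  have hI4: "\<bar>I4\<bar> \<le> E/(1-\<beta>)"
  proof -
    have "\<bar>I4\<bar> \<le> d powr (-(1+2*\<alpha>)) * ((d powr (1-\<beta>) - 1) / (1-\<beta>))" using P4(2) by (simp add: I4_def)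
    also have "\<dots> \<le> d powr (-(1+2*\<alpha>)) * (d powr (1-\<beta>) / (1-\<beta>))"
      using b2 by (intro mult_left_mono divide_right_mono) auto
    also have "\<dots> = E/(1-\<beta>)" using e2 by simp
    finally show ?thesis .
  qed
  have MM: "M * (d powr (2 - 2*\<alpha>) / (2 - 2*\<alpha>)) = 2*E/(2-2*\<alpha>)"
    unfolding M_def using e3 by simp
  have hH2: "\<bar>H2\<bar> \<le> 2*E/(2-2*\<alpha>)" using PHl(2)[OF d0 order_refl] unfolding H2_def MM .
  have hH3: "\<bar>H3\<bar> \<le> 2*E/(2-2*\<alpha>)" using PHr(2)[OF d0 order_refl] unfolding H3_def MM .
  have mvt: "\<bar>(R-1) powr (-(2*\<alpha>)) - R powr (-(2*\<alpha>))\<bar> \<le> (2*\<alpha>) * (R-1) powr (-(2*\<alpha>)-1)"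
  proof -
    have D: "DERIV (\<lambda>t. t powr (-(2*\<alpha>))) t :> (-(2*\<alpha>)) * t powr (-(2*\<alpha>)-1)" if "t \<in> {R-1..R}" for t
      using that R4 by (auto intro!: derivative_eq_intros)
    have B: "\<bar>(-(2*\<alpha>)) * t powr (-(2*\<alpha>)-1)\<bar> \<le> (2*\<alpha>) * (R-1) powr (-(2*\<alpha>)-1)" if "t \<in> {R-1..R}" for t
    proof -
      have "t powr (-(2*\<alpha>)-1) \<le> (R-1) powr (-(2*\<alpha>)-1)" using that R4 a1 by (intro powr_mono2') auto
      then show ?thesis using a0 by (simp add: abs_mult)
    qed
    have "\<bar>(R-1) powr (-(2*\<alpha>)) - R powr (-(2*\<alpha>))\<bar> \<le> (2*\<alpha>) * (R-1) powr (-(2*\<alpha>)-1) * \<bar>(R-1) - R\<bar>"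
      by (rule lip[OF D B]) (use R4 in auto)
    then show ?thesis by simp
  qed
  have m2: "(R-1) powr (-(2*\<alpha>)-1) \<le> E"
  proof -
    have "(R-1) powr (-(2*\<alpha>)-1) \<le> d powr (-(2*\<alpha>)-1)" using dR d2 a1 by (intro powr_mono2') auto
    also have "\<dots> \<le> E" unfolding E_def using d2 b2 by (intro powr_mono) auto
    finally show ?thesis .
  qed
  have hI5: "\<bar>I5 + R powr (-(2*\<alpha>)) / (2*\<alpha>)\<bar> \<le> (E + 2*\<alpha>*E)/(2*\<alpha>)"
  proof -
    have eq: "I5 + R powr (-(2*\<alpha>)) / (2*\<alpha>) =
        (R powr (-\<beta>) * (R-1) powr (-(2*\<alpha>)) - ((R-1) powr (-(2*\<alpha>)) - R powr (-(2*\<alpha>)))) / (2*\<alpha>)"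
      using P5(2) unfolding I5_def by (simp add: algebra_simps add_divide_distrib diff_divide_distrib)
    have t1: "0 \<le> R powr (-\<beta>) * (R-1) powr (-(2*\<alpha>))" by simp
    have t2: "R powr (-\<beta>) * (R-1) powr (-(2*\<alpha>)) \<le> E"
      using Ed R1d by (meson mult_left_mono order_trans powr_ge_zero)
    have t3: "\<bar>(R-1) powr (-(2*\<alpha>)) - R powr (-(2*\<alpha>))\<bar> \<le> 2*\<alpha>*E"
      using mvt m2 a0 by (meson mult_left_mono order_trans less_imp_le)
    have "\<bar>R powr (-\<beta>) * (R-1) powr (-(2*\<alpha>)) - ((R-1) powr (-(2*\<alpha>)) - R powr (-(2*\<alpha>)))\<bar> \<le> E + 2*\<alpha>*E"
      using t1 t2 t3 by linarith
    then show ?thesis unfolding eq abs_divide using a0 by (simp add: divide_right_mono)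
  qed
  have sum: "Lv + R powr (-(2*\<alpha>)) / (2*\<alpha>) = I1 + I4 + H2 + H3 + (I5 + R powr (-(2*\<alpha>)) / (2*\<alpha>))"
    unfolding Lv_def by simp
  have "\<bar>Lv + R powr (-(2*\<alpha>)) / (2*\<alpha>)\<bar> \<le> E/(2*\<alpha>) + E/(1-\<beta>) + 2*E/(2-2*\<alpha>) + 2*E/(2-2*\<alpha>) + (E + 2*\<alpha>*E)/(2*\<alpha>)"
    unfolding sum using hI1 hI4 hH2 hH3 hI5 by linarith
  also have "\<dots> = (1/(2*\<alpha>) + 1/(1-\<beta>) + 4/(2-2*\<alpha>) + (1+2*\<alpha>)/(2*\<alpha>)) * E"
    by (simp add: field_simps)
  finally show ?thesis unfolding E_def .
qed

end



context LL begin

definition "C0 = (1/(2*\<alpha>) + 1/(1-\<beta>) + 4/(2-2*\<alpha>) + (1+2*\<alpha>)/(2*\<alpha>))"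

lemma ftr: "frac_trunc \<alpha> \<phi> x = (\<lambda>e. LINT z:{z. e < \<bar>x - z\<bar>}|lborel. f z)"
  by (rule ext) (simp add: frac_trunc_def f_def)

lemma integrand: "(\<lambda>z. (\<phi> x - \<phi> z) / \<bar>x - z\<bar> powr (1 + 2 * \<alpha>)) = f"
  by (rule ext) (simp add: f_def)

lemma pv: "frac_pv_exists \<alpha> \<phi> x"
  unfolding frac_pv_exists_def integrand
proof (intro conjI allI impI)
  fix e :: real assume e: "0 < e"
  show "set_integrable lborel {z. e < \<bar>x - z\<bar>} f"
  proof (cases "e < d")
    case True then show ?thesis using trunc_eq(1) e by simp
  next
    case False
    have d0: "0 < d/2" "d/2 < d" using d2 by auto
    show ?thesis
      by (rule set_integrable_subset[OF trunc_eq(1)[OF d0]]) (use False d2 in auto)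
  qed
next
  show "\<exists>L. (frac_trunc \<alpha> \<phi> x \<longlongrightarrow> L) (at_right 0)"
    unfolding ftr using trunc_lim by blast
qed

lemma lap: "frac_lap \<alpha> \<phi> x = frac_const \<alpha> * Lv"
  unfolding frac_lap_def ftr using tendsto_Lim[OF trivial_limit_at_right_real trunc_lim] by simp

lemma der: "deriv \<phi> x = \<beta> * R powr (-\<beta>-1)"
proof -
  have "((\<lambda>z. (-z) powr (-\<beta>)) has_real_derivative \<beta> * (-x) powr (-\<beta>-1)) (at x)"
    using xb by (auto intro!: derivative_eq_intros simp: algebra_simps)
  then have "(\<phi> has_real_derivative \<beta> * (-x) powr (-\<beta>-1)) (at x)"
    by (rule has_field_derivative_transform_within_open[where S="{..< -1}"]) (use xb in \<open>auto simp: phi_neg\<close>)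
  from DERIV_imp_deriv[OF this] show ?thesis by (simp add: R_def)
qed

lemma final_bound:
  "\<bar>frac_lap \<alpha> \<phi> x + c * deriv \<phi> x
           - (- frac_const \<alpha> / (2 * \<alpha> * \<bar>x\<bar> powr (2 * \<alpha>)) + c * \<beta> / \<bar>x\<bar> powr (\<beta> + 1))\<bar>
   \<le> (\<bar>frac_const \<alpha>\<bar> * C0 * 2 powr (\<beta> + 2*\<alpha>)) * \<bar>1 / \<bar>x\<bar> powr (\<beta> + 2 * \<alpha>)\<bar>"
proof -
  have ax: "\<bar>x\<bar> = R" using xb by (simp add: R_def)
  have R0: "0 < R" using R4 by simp
  have e1: "c * (\<beta> * R powr (-\<beta>-1)) = c * \<beta> / R powr (\<beta> + 1)"
  proof -
    have ex: "-\<beta>-1 = -(\<beta>+1)" by simp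
    show ?thesis unfolding ex powr_minus_divide by simp
  qed
  have e2: "- frac_const \<alpha> / (2 * \<alpha> * R powr (2 * \<alpha>)) = - (frac_const \<alpha> * (R powr (-(2*\<alpha>)) / (2*\<alpha>)))"
    using R0 a1 by (simp add: powr_minus field_simps)
  have eq: "frac_lap \<alpha> \<phi> x + c * deriv \<phi> x
           - (- frac_const \<alpha> / (2 * \<alpha> * \<bar>x\<bar> powr (2 * \<alpha>)) + c * \<beta> / \<bar>x\<bar> powr (\<beta> + 1))
        = frac_const \<alpha> * (Lv + R powr (-(2*\<alpha>)) / (2*\<alpha>))"
    unfolding lap der ax e1[symmetric] e2 by (simp add: algebra_simps)
  have dp: "d powr (-(\<beta>+2*\<alpha>)) = 2 powr (\<beta> + 2*\<alpha>) * \<bar>1 / \<bar>x\<bar> powr (\<beta> + 2 * \<alpha>)\<bar>"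
  proof -
    have "d powr (-(\<beta>+2*\<alpha>)) = inverse (R powr (\<beta>+2*\<alpha>) / 2 powr (\<beta>+2*\<alpha>))"
      unfolding d_def by (subst powr_minus) (subst powr_divide, use R0 in auto)
    also have "\<dots> = 2 powr (\<beta> + 2*\<alpha>) * (1 / R powr (\<beta>+2*\<alpha>))"
      by (simp only: inverse_divide) simp
    also have "1 / R powr (\<beta>+2*\<alpha>) = \<bar>1 / R powr (\<beta>+2*\<alpha>)\<bar>" by simp
    finally show ?thesis unfolding ax .
  qed
  have "\<bar>frac_const \<alpha> * (Lv + R powr (-(2*\<alpha>)) / (2*\<alpha>))\<bar> \<le> \<bar>frac_const \<alpha>\<bar> * (C0 * d powr (-(\<beta>+2*\<alpha>)))"
    unfolding abs_mult C0_def by (intro mult_left_mono Lbound) auto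
  then show ?thesis unfolding eq dp by (simp only: mult.assoc)
qed

end

theorem lemma2p2:
  fixes \<alpha> \<beta> c :: real and \<phi> :: "real \<Rightarrow> real"
  assumes "1/2 < \<alpha>" "\<alpha> < 1" "0 < \<beta>" "\<beta> < 1"
    and "\<And>x. \<phi> x = (if x < -1 then \<bar>x\<bar> powr (- \<beta>) else 1)"
  shows "eventually (\<lambda>x. frac_pv_exists \<alpha> \<phi> x) at_bot
    \<and> (\<lambda>x. frac_lap \<alpha> \<phi> x + c * deriv \<phi> x
           - (- frac_const \<alpha> / (2 * \<alpha> * \<bar>x\<bar> powr (2 * \<alpha>)) + c * \<beta> / \<bar>x\<bar> powr (\<beta> + 1)))
      \<in> O[at_bot](\<lambda>x. 1 / \<bar>x\<bar> powr (\<beta> + 2 * \<alpha>))"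
proof -
  have L: "LL \<alpha> \<beta> x \<phi>" if "x \<le> -4" for x
    using assms that by unfold_locales auto
  have ev: "eventually (\<lambda>x::real. x \<le> -4) at_bot" by (rule eventually_le_at_bot)
  define K where "K = \<bar>frac_const \<alpha>\<bar> * LL.C0 \<alpha> \<beta> * 2 powr (\<beta> + 2*\<alpha>)"
  show ?thesis
  proof
    show "eventually (\<lambda>x. frac_pv_exists \<alpha> \<phi> x) at_bot"
      using ev by eventually_elim (rule LL.pv[OF L])
    show "(\<lambda>x. frac_lap \<alpha> \<phi> x + c * deriv \<phi> x
           - (- frac_const \<alpha> / (2 * \<alpha> * \<bar>x\<bar> powr (2 * \<alpha>)) + c * \<beta> / \<bar>x\<bar> powr (\<beta> + 1)))
      \<in> O[at_bot](\<lambda>x. 1 / \<bar>x\<bar> powr (\<beta> + 2 * \<alpha>))"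
    proof (rule bigoI[where c=K])
      show "eventually (\<lambda>x. norm (frac_lap \<alpha> \<phi> x + c * deriv \<phi> x
           - (- frac_const \<alpha> / (2 * \<alpha> * \<bar>x\<bar> powr (2 * \<alpha>)) + c * \<beta> / \<bar>x\<bar> powr (\<beta> + 1)))
          \<le> K * norm (1 / \<bar>x\<bar> powr (\<beta> + 2 * \<alpha>))) at_bot"
        using ev
      proof eventually_elim
        case (elim x)
        show ?case using LL.final_bound[OF L[OF elim], of c] unfolding K_def real_norm_def .
      qed
    qed
  qed
qed


end
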